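(* Let $\mathsf{C}\subset V$ be a proper cone, $\phi$ in the interior of $\mathsf{C}^*$, $k\ge1$, and $K_\phi=\mathsf{C}\cap\phi^{-1}(1)$. If $\gamma_k^\phi$ is entanglement-breaking, then $K_\phi$ is a polytope.
   Context: Proper cone: closed convex cone in a finite-dimensional real vector space, containing no line, not contained in a hyperplane; $\mathsf{C}^*$ is its dual cone. $\otimes_{\min}$: $\mathsf{C}_1\otimes_{\min}\mathsf{C}_2=\mathrm{conv}\{x\otimes y:x\in\mathsf{C}_1,y\in\mathsf{C}_2\}$, iterated. The $k$th reduction map $\gamma_k^\phi=\frac1k\sum_{j=1}^k\phi^{\otimes(j-1)}\otimes\mathrm{Id}_V\otimes\phi^{\otimes(k-j)}:V^{\otimes k}\to V$ is viewed as a tensor in $(V^* )^{\otimes k}\otimes V$; it is entanglement-breaking if this tensor belongs to $(\mathsf{C}^* )^{\otimes_{\min}k}\otimes_{\min}\mathsf{C}$. *)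

theory Defs
  imports "HOL-Analysis.Analysis"
begin

text \<open>V = real^'n (finite-dimensional real vector space with a fixed basis).
  The dual space V* is identified with V via the standard inner product,
  so a functional f acts as x \<mapsto> f \<bullet> x; dual-basis coordinates of f are f $ i.\<close>

definition proper_cone :: "(real^'n) set \<Rightarrow> bool" where
  "proper_cone C \<longleftrightarrow> closed C \<and> convex_cone C \<and> (\<forall>x. x \<in> C \<and> - x \<in> C \<longrightarrow> x = 0)
     \<and> span C = UNIV"

definition dual_cone :: "(real^'n) set \<Rightarrow> (real^'n) set" where
  "dual_cone C = {f. \<forall>x\<in>C. 0 \<le> f \<bullet> x}"

text \<open>Tensors in (V*)^{\<otimes>k} \<otimes> V, with the k tensor factors indexed by a finite
  type 'k with CARD('k) = k, written in coordinates w.r.t. the product basis.\<close>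

definition prod_tensor :: "('k::finite \<Rightarrow> real^'n) \<Rightarrow> real^'n \<Rightarrow> real^(('n^'k) \<times> 'n)" where
  "prod_tensor f x = (\<chi> p. (\<Prod>l\<in>UNIV. f l $ (fst p $ l)) * x $ snd p)"

text \<open>(C*)^{\<otimes>min k} \<otimes>min C: convex hull of product tensors f_1\<otimes>...\<otimes>f_k\<otimes>x.\<close>

definition min_tensor_cone :: "(real^'n) set \<Rightarrow> (real^'n) set \<Rightarrow> (real^(('n^'k::finite) \<times> 'n)) set" where
  "min_tensor_cone D C = convex hull {prod_tensor f x | f x. (\<forall>l. f l \<in> D) \<and> x \<in> C}"

text \<open>The k-th reduction map \<gamma>_k^\<phi> as a tensor in (V*)^{\<otimes>k} \<otimes> V:
  its (i,m) coefficient is the m-th coordinate of \<gamma>(e_{i_1}\<otimes>...\<otimes>e_{i_k}).\<close>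

definition reduction_tensor :: "real^'n \<Rightarrow> real^(('n^'k::finite) \<times> 'n)" where
  "reduction_tensor \<phi> = (\<chi> p. (1 / real CARD('k)) *
      (\<Sum>j\<in>UNIV. (if fst p $ j = snd p then 1 else 0) * (\<Prod>l\<in>UNIV - {j}. \<phi> $ (fst p $ l))))"

definition entanglement_breaking :: "(real^'n) set \<Rightarrow> real^'n \<Rightarrow> 'k::finite itself \<Rightarrow> bool" where
  "entanglement_breaking C \<phi> _ \<longleftrightarrow>
     (reduction_tensor \<phi> :: real^(('n^'k) \<times> 'n)) \<in> min_tensor_cone (dual_cone C) C"

end

theory Submission imports Defs begin

lemma sum_prod_vec:
  fixes g :: "'k::finite \<Rightarrow> 'n::finite \<Rightarrow> real"
  shows "(\<Sum>i\<in>(UNIV::('n^'k) set). \<Prod>l\<in>UNIV. g l (i$l)) = (\<Prod>l\<in>UNIV. \<Sum>a\<in>UNIV. g l a)"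
proof -
  have "(\<Prod>l\<in>UNIV. \<Sum>a\<in>UNIV. g l a) = (\<Sum>h\<in>(UNIV::('k\<Rightarrow>'n) set). \<Prod>l\<in>UNIV. g l (h l))"
    using prod_sum_PiE[of "UNIV::'k set" "\<lambda>_. UNIV::'n set" g] by simp
  also have "\<dots> = (\<Sum>i\<in>(UNIV::('n^'k) set). \<Prod>l\<in>UNIV. g l (i$l))"
  proof -
    have i: "inj (vec_nth :: 'n^'k \<Rightarrow> _)" by (simp add: inj_def vec_eq_iff)
    have r: "range (vec_nth :: 'n^'k \<Rightarrow> _) = UNIV"
      by (metis surj_def vec_lambda_inverse UNIV_I)
    show ?thesis using sum.reindex[OF i, of "\<lambda>h. \<Prod>l\<in>UNIV. g l (h l)"] r by simp
  qed
  finally show ?thesis ..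
qed

definition ev :: "real^'n \<Rightarrow> real^(('n^'k::finite) \<times> 'n) \<Rightarrow> 'n \<Rightarrow> real" where
  "ev y t m = (\<Sum>i\<in>UNIV. t $ (i,m) * (\<Prod>l\<in>UNIV. y $ (i$l)))"

lemma ev_prod:
  fixes f :: "'k::finite \<Rightarrow> real^'n"
  shows "ev y (prod_tensor f x) m = x$m * (\<Prod>l\<in>UNIV. f l \<bullet> y)"
proof -
  have "ev y (prod_tensor f x) m = x$m * (\<Sum>i\<in>(UNIV::('n^'k) set). \<Prod>l\<in>UNIV. f l $ (i$l) * y $ (i$l))"
    unfolding ev_def prod_tensor_def by (simp add: sum_distrib_left prod.distrib mult.commute mult.left_commute)
  also have "\<dots> = x$m * (\<Prod>l\<in>UNIV. f l \<bullet> y)"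
    by (subst sum_prod_vec) (simp add: inner_vec_def)
  finally show ?thesis .
qed

lemma ev_lin:
  assumes "finite S"
  shows "ev y (\<Sum>s\<in>S. u s *\<^sub>R s) m = (\<Sum>s\<in>S. u s * ev y s m)"
  unfolding ev_def using assms
  by (simp add: sum_component sum_distrib_right sum_distrib_left sum.swap[of _ S] mult.assoc)

lemma ev_red:
  assumes "\<phi> \<bullet> y = 1"
  shows "ev y (reduction_tensor \<phi> :: real^((('n::finite)^'k::finite) \<times> 'n)) m = y$m"
proof -
  define g where "g j l a = (if l = j then (if a = m then y$a else 0) else \<phi>$a * y$a)" for j l :: 'k and a :: 'n
  have step: "(\<Sum>i\<in>(UNIV::('n^'k) set). (if i$j = m then 1 else 0) * (\<Prod>l\<in>UNIV - {j}. \<phi> $ (i$l)) * (\<Prod>l\<in>UNIV. y $ (i$l)))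
     = y$m" for j :: 'k
  proof -
    have "(\<Sum>i\<in>(UNIV::('n^'k) set). (if i$j = m then 1 else 0) * (\<Prod>l\<in>UNIV - {j}. \<phi> $ (i$l)) * (\<Prod>l\<in>UNIV. y $ (i$l)))
       = (\<Sum>i\<in>(UNIV::('n^'k) set). \<Prod>l\<in>UNIV. g j l (i$l))"
    proof (rule sum.cong[OF refl])
      fix i :: "'n^'k"
      have a: "(\<Prod>l\<in>UNIV. g j l (i$l)) = g j j (i$j) * (\<Prod>l\<in>UNIV-{j}. g j l (i$l))"
        by (simp add: prod.remove)
      have b: "(\<Prod>l\<in>UNIV. y $ (i$l)) = y $ (i$j) * (\<Prod>l\<in>UNIV-{j}. y $ (i$l))"
        by (simp add: prod.remove)
      have c: "(\<Prod>l\<in>UNIV-{j}. g j l (i$l)) = (\<Prod>l\<in>UNIV-{j}. \<phi> $ (i$l)) * (\<Prod>l\<in>UNIV-{j}. y $ (i$l))"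
        by (simp add: g_def prod.distrib[symmetric])
      show "(if i$j = m then 1 else 0) * (\<Prod>l\<in>UNIV - {j}. \<phi> $ (i$l)) * (\<Prod>l\<in>UNIV. y $ (i$l)) = (\<Prod>l\<in>UNIV. g j l (i$l))"
        unfolding a b c by (simp add: g_def)
    qed
    also have "\<dots> = (\<Prod>l\<in>UNIV. \<Sum>a\<in>UNIV. g j l a)" by (rule sum_prod_vec)
    also have "\<dots> = (\<Sum>a\<in>UNIV. g j j a) * (\<Prod>l\<in>UNIV-{j}. \<Sum>a\<in>UNIV. g j l a)"
      by (simp add: prod.remove)
    also have "\<dots> = y$m"
    proof -
      have "(\<Sum>a\<in>UNIV. g j j a) = y$m" by (simp add: g_def)
      moreover have "(\<Prod>l\<in>UNIV-{j}. \<Sum>a\<in>UNIV. g j l a) = 1"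
        using assms by (simp add: g_def inner_vec_def)
      ultimately show ?thesis by simp
    qed
    finally show ?thesis .
  qed
  have "ev y (reduction_tensor \<phi> :: real^(('n^'k::finite) \<times> 'n)) m =
     (1 / real CARD('k)) * (\<Sum>j\<in>UNIV. \<Sum>i\<in>(UNIV::('n^'k) set). (if i$j = m then 1 else 0) * (\<Prod>l\<in>UNIV - {j}. \<phi> $ (i$l)) * (\<Prod>l\<in>UNIV. y $ (i$l)))"
    unfolding ev_def reduction_tensor_def
    by (simp add: sum_distrib_left sum_distrib_right sum.swap[of _ "UNIV::'k set"] mult.assoc)
  also have "\<dots> = y$m" by (simp add: step)
  finally show ?thesis .
qed


lemma interior_pos:
  fixes C :: "(real^'n) set"
  assumes "\<phi> \<in> interior (dual_cone C)" "x \<in> C" "x \<noteq> 0"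
  shows "\<phi> \<bullet> x > 0"
proof -
  obtain e where e: "e > 0" "ball \<phi> e \<subseteq> dual_cone C"
    using assms(1) mem_interior by blast
  define g where "g = \<phi> - ((e/2) / norm x) *\<^sub>R x"
  have "dist \<phi> g = e/2" using e assms(3) by (simp add: g_def dist_norm)
  hence "g \<in> dual_cone C" using e by auto
  hence "0 \<le> g \<bullet> x" using assms(2) by (simp add: dual_cone_def)
  also have "g \<bullet> x = \<phi> \<bullet> x - (e/2) * norm x"
    using assms(3) by (simp add: g_def inner_diff_left power2_norm_eq_inner[symmetric] power2_eq_square)
  finally show ?thesis using e assms(3) by (smt (verit) divide_pos_pos zero_less_norm_iff mult_pos_pos)
qed

theorem lemma3:
  fixes C :: "(real^'n) set" and \<phi> :: "real^'n"
  assumes "proper_cone C"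
    and "\<phi> \<in> interior (dual_cone C)"
    and "entanglement_breaking C \<phi> TYPE('k::finite)"
  shows "polytope {x \<in> C. \<phi> \<bullet> x = 1}"
proof -
  have cc: "convex_cone C" using assms(1) by (simp add: proper_cone_def)
  have phiD: "\<phi> \<in> dual_cone C" using assms(2) interior_subset by blast
  let ?T = "reduction_tensor \<phi> :: real^(('n^'k) \<times> 'n)"
  let ?P = "{prod_tensor f x | (f :: 'k \<Rightarrow> real^'n) x. (\<forall>l. f l \<in> dual_cone C) \<and> x \<in> C}"
  have "?T \<in> convex hull ?P" using assms(3)
    by (simp add: entanglement_breaking_def min_tensor_cone_def)
  then obtain S u where S: "finite S" "S \<subseteq> ?P" "\<forall>x\<in>S. 0 \<le> u x" "sum u S = 1"
      "(\<Sum>v\<in>S. u v *\<^sub>R v) = ?T"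
    unfolding convex_hull_explicit by blast
  have "\<forall>s\<in>S. \<exists>fx. s = prod_tensor (fst fx) (snd fx) \<and> (\<forall>l. fst fx l \<in> dual_cone C) \<and> snd fx \<in> C"
    using S(2) by fastforce
  then obtain FX where FX: "\<And>s. s \<in> S \<Longrightarrow> s = prod_tensor (fst (FX s)) (snd (FX s)) \<and> (\<forall>l. fst (FX s) l \<in> dual_cone C) \<and> snd (FX s) \<in> C"
    by metis
  define F where "F s = fst (FX s)" for s
  define X where "X s = snd (FX s)" for s
  have Fs: "s = prod_tensor (F s) (X s)" "F s l \<in> dual_cone C" "X s \<in> C" if "s \<in> S" for s l
    using FX[OF that] by (auto simp: F_def X_def)
  define S' where "S' = {s \<in> S. \<phi> \<bullet> X s > 0}"
  define Q where "Q = (\<lambda>s. (1 / (\<phi> \<bullet> X s)) *\<^sub>R X s) ` S'"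
  have finQ: "finite Q" using S(1) by (simp add: Q_def S'_def)
  have convK: "convex {x \<in> C. \<phi> \<bullet> x = 1}"
  proof -
    have "{x \<in> C. \<phi> \<bullet> x = 1} = C \<inter> {x. \<phi> \<bullet> x = 1}" by auto
    moreover have "convex C" using cc by (simp add: convex_cone_def)
    ultimately show ?thesis using convex_hyperplane convex_Int by metis
  qed
  have QK: "Q \<subseteq> {x \<in> C. \<phi> \<bullet> x = 1}"
  proof
    fix q assume "q \<in> Q"
    then obtain s where s: "s \<in> S'" "q = (1 / (\<phi> \<bullet> X s)) *\<^sub>R X s" by (auto simp: Q_def)
    have "X s \<in> C" using s Fs(3) by (auto simp: S'_def)
    moreover have "1 / (\<phi> \<bullet> X s) \<ge> 0" using s by (auto simp: S'_def)
    ultimately have "q \<in> C" using s cc by (simp add: convex_cone_def conic_def)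
    moreover have "\<phi> \<bullet> q = 1" using s by (auto simp: S'_def)
    ultimately show "q \<in> {x \<in> C. \<phi> \<bullet> x = 1}" by simp
  qed
  have KQ: "{x \<in> C. \<phi> \<bullet> x = 1} \<subseteq> convex hull Q"
  proof
    fix y assume y: "y \<in> {x \<in> C. \<phi> \<bullet> x = 1}"
    define c where "c s = u s * (\<Prod>l\<in>UNIV. F s l \<bullet> y)" for s
    have cpos: "c s \<ge> 0" if "s \<in> S" for s
      using S(3) that Fs(2)[OF that] y
      by (auto simp: c_def dual_cone_def intro!: mult_nonneg_nonneg prod_nonneg)
    have yeq: "y = (\<Sum>s\<in>S. c s *\<^sub>R X s)"
    proof (subst vec_eq_iff, intro allI)
      fix m
      have "ev y ?T m = y $ m" by (rule ev_red) (use y in simp)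
      hence "y $ m = ev y ?T m" by simp
      also have "\<dots> = ev y (\<Sum>v\<in>S. u v *\<^sub>R v) m" by (simp only: S(5))
      also have "\<dots> = (\<Sum>s\<in>S. u s * ev y s m)" by (rule ev_lin[OF S(1)])
      also have "\<dots> = (\<Sum>s\<in>S. c s * X s $ m)"
      proof (rule sum.cong[OF refl])
        fix s assume s: "s \<in> S"
        have "ev y s m = ev y (prod_tensor (F s) (X s)) m" using arg_cong[OF Fs(1)[OF s], of "\<lambda>t. ev y t m"] .
        thus "u s * ev y s m = c s * X s $ m" by (simp add: ev_prod c_def)
      qed
      finally show "y $ m = (\<Sum>s\<in>S. c s *\<^sub>R X s) $ m" by (simp add: sum_component)
    qed
    have zero: "X s = 0" if "s \<in> S - S'" for s
    proof (rule ccontr)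
      assume "X s \<noteq> 0"
      hence "\<phi> \<bullet> X s > 0" using interior_pos[OF assms(2) Fs(3)] that by auto
      thus False using that by (auto simp: S'_def)
    qed
    have "S' \<subseteq> S" by (auto simp: S'_def)
    moreover have "\<forall>i\<in>S - S'. c i *\<^sub>R X i = 0" using zero by simp
    ultimately have "(\<Sum>s\<in>S. c s *\<^sub>R X s) = (\<Sum>s\<in>S'. c s *\<^sub>R X s)"
      by (rule sum.mono_neutral_right[OF S(1)])
    with yeq have e: "y = (\<Sum>s\<in>S'. c s *\<^sub>R X s)" by (rule trans)
    have "y = (\<Sum>s\<in>S'. c s *\<^sub>R X s)" by (rule e)
    also have "\<dots> = (\<Sum>s\<in>S'. (c s * (\<phi> \<bullet> X s)) *\<^sub>R ((1 / (\<phi> \<bullet> X s)) *\<^sub>R X s))"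
    proof (rule sum.cong[OF refl])
      fix s assume "s \<in> S'"
      hence p: "\<phi> \<bullet> X s > 0" by (simp add: S'_def)
      show "c s *\<^sub>R X s = (c s * (\<phi> \<bullet> X s)) *\<^sub>R ((1 / (\<phi> \<bullet> X s)) *\<^sub>R X s)"
        using p by simp
    qed
    finally have y2: "y = \<dots>" .
    have w1: "(\<Sum>s\<in>S'. c s * (\<phi> \<bullet> X s)) = 1"
    proof -
      have p1: "\<phi> \<bullet> y = 1" using y by blast
      have "1 = \<phi> \<bullet> (\<Sum>s\<in>S'. c s *\<^sub>R X s)" by (subst e[symmetric]) (rule p1[symmetric])
      thus ?thesis by (simp add: inner_sum_right)
    qed
    have "(\<Sum>s\<in>S'. (c s * (\<phi> \<bullet> X s)) *\<^sub>R ((1 / (\<phi> \<bullet> X s)) *\<^sub>R X s)) \<in> convex hull Q"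
    proof (rule convex_sum)
      show "finite S'" using S(1) by (simp add: S'_def)
      show "convex (convex hull Q)" by (rule convex_convex_hull)
      show "(\<Sum>s\<in>S'. c s * (\<phi> \<bullet> X s)) = 1" by (rule w1)
    next
      fix i assume i: "i \<in> S'"
      hence iS: "i \<in> S" and p: "\<phi> \<bullet> X i > 0" by (auto simp: S'_def)
      show "0 \<le> c i * (\<phi> \<bullet> X i)" using cpos[OF iS] p by simp
    next
      fix i assume i: "i \<in> S'"
      have "(1 / (\<phi> \<bullet> X i)) *\<^sub>R X i \<in> Q" unfolding Q_def using i by (rule imageI)
      thus "(1 / (\<phi> \<bullet> X i)) *\<^sub>R X i \<in> convex hull Q" by (rule hull_inc)
    qed
    thus "y \<in> convex hull Q" by (rule ssubst[OF y2, of "\<lambda>z. z \<in> convex hull Q"])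
  qed
  have "{x \<in> C. \<phi> \<bullet> x = 1} = convex hull Q"
    using KQ hull_minimal[of Q "{x \<in> C. \<phi> \<bullet> x = 1}" convex, OF QK convK] by blast
  thus ?thesis using finQ polytope_def by blast
qed

end
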